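(* Fix $\beta > 0$ and for $\alpha > 0$ let $G_\alpha(s) = \frac{\beta}{\alpha}\exp(-\frac{\beta s}{\alpha})$ for $s \geq 0$ and $G_\alpha(s) = 0$ for $s < 0$. For each $\epsilon > 0$ there exists $C > 0$ such that for all $\tau > 0$, all $\alpha$ with $0 < \alpha \leq \tau / C$, and all $u \in \mathrm{L}^2(\mathbb{R})$ which are constant on each interval $]k\tau,(k+1)\tau[$, $k \in \mathbb{Z}$: $$\| u - G_\alpha \ast u \|_{\mathrm{L}^2(\mathbb{R})} \leq \epsilon \| u\|_{\mathrm{L}^2(\mathbb{R})}.$$
   Context: $\ast$ denotes convolution on $\mathbb{R}$. *)

theory Defs
  imports "HOL-Analysis.Analysis"
begin

definition G_kernel :: "real \<Rightarrow> real \<Rightarrow> real \<Rightarrow> real" where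
  "G_kernel \<beta> \<alpha> s = (if s \<ge> 0 then \<beta> / \<alpha> * exp (- \<beta> * s / \<alpha>) else 0)"

definition conv :: "(real \<Rightarrow> real) \<Rightarrow> (real \<Rightarrow> real) \<Rightarrow> real \<Rightarrow> real" where
  "conv f g x = (LINT y|lborel. f (x - y) * g y)"

definition L2_norm :: "(real \<Rightarrow> real) \<Rightarrow> real" where
  "L2_norm f = sqrt (LINT x|lborel. (f x)\<^sup>2)"

end

theory Submission
  imports Defs "HOL-Probability.Distributions"
begin

lemma cell_integral:
  fixes u :: "real \<Rightarrow> real" and \<tau> :: real
  assumes tau: "\<tau> > 0" and um[measurable]: "u \<in> borel_measurable lborel"
    and pc: "\<forall>k::int. \<exists>c. \<forall>x \<in> {of_int k * \<tau> <..< (of_int k + 1) * \<tau>}. u x = c"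
    and x: "x \<in> {of_int k * \<tau> <..< (of_int k + 1) * \<tau>}"
  shows "ennreal ((u x)\<^sup>2) = ennreal (1/\<tau>) * (\<integral>\<^sup>+y. ennreal ((u y)\<^sup>2) * indicator {y. \<lfloor>y/\<tau>\<rfloor> = k} y \<partial>lborel)"
proof -
  obtain c where c: "\<forall>y \<in> {of_int k * \<tau> <..< (of_int k + 1) * \<tau>}. u y = c" using pc by blast
  have ux: "u x = c" using c x by blast
  have set: "{y. \<lfloor>y/\<tau>\<rfloor> = k} = {of_int k * \<tau> ..< (of_int k + 1) * \<tau>}"
    using tau by (auto simp: floor_eq_iff field_simps)
  have "(\<integral>\<^sup>+y. ennreal ((u y)\<^sup>2) * indicator {y. \<lfloor>y/\<tau>\<rfloor> = k} y \<partial>lborel)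
      = (\<integral>\<^sup>+y. ennreal (c\<^sup>2) * indicator {of_int k * \<tau> <..< (of_int k + 1) * \<tau>} y \<partial>lborel)"
  proof (rule nn_integral_cong_AE)
    have "AE y in lborel. y \<noteq> of_int k * \<tau>" by (rule AE_lborel_singleton)
    then show "AE y in lborel. ennreal ((u y)\<^sup>2) * indicator {y. \<lfloor>y/\<tau>\<rfloor> = k} y
       = ennreal (c\<^sup>2) * indicator {of_int k * \<tau> <..< (of_int k + 1) * \<tau>} y"
      by eventually_elim (use c in \<open>auto simp: set indicator_def\<close>)
  qed
  also have "\<dots> = ennreal (c\<^sup>2) * ennreal \<tau>"
    using tau by (simp add: nn_integral_cmult_indicator algebra_simps)
  finally show ?thesis using tau ux
    by (simp add: ennreal_mult'[symmetric])
qed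

lemma cell_bound:
  fixes u :: "real \<Rightarrow> real" and \<tau> s :: real
  assumes tau: "\<tau> > 0" and um[measurable]: "u \<in> borel_measurable lborel"
    and pc: "\<forall>k::int. \<exists>c. \<forall>x \<in> {of_int k * \<tau> <..< (of_int k + 1) * \<tau>}. u x = c"
    and E[measurable]: "E \<in> sets lborel" and s: "s \<ge> 0"
    and Ek: "\<And>k::int. emeasure lborel (E \<inter> {x. \<lfloor>x/\<tau>\<rfloor> = k}) \<le> ennreal s"
  shows "(\<integral>\<^sup>+x. ennreal ((u x)\<^sup>2) * indicator E x \<partial>lborel) \<le> ennreal (s/\<tau>) * (\<integral>\<^sup>+x. ennreal ((u x)\<^sup>2) \<partial>lborel)"
proof -
  have AEx: "AE x in lborel. x \<notin> range (\<lambda>k::int. of_int k * \<tau>)"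
    by (rule AE_I'[OF countable_imp_null_set_lborel[of "range (\<lambda>k::int. of_int k * \<tau>)"]]) auto
  have "(\<integral>\<^sup>+x. ennreal ((u x)\<^sup>2) * indicator E x \<partial>lborel)
     = (\<integral>\<^sup>+x. ennreal (1/\<tau>) * (\<integral>\<^sup>+y. ennreal ((u y)\<^sup>2) * indicator E x * indicator {y. \<lfloor>y/\<tau>\<rfloor> = \<lfloor>x/\<tau>\<rfloor>} y \<partial>lborel) \<partial>lborel)"
  proof (rule nn_integral_cong_AE)
    show "AE x in lborel. ennreal ((u x)\<^sup>2) * indicator E x = ennreal (1/\<tau>) * (\<integral>\<^sup>+y. ennreal ((u y)\<^sup>2) * indicator E x * indicator {y. \<lfloor>y/\<tau>\<rfloor> = \<lfloor>x/\<tau>\<rfloor>} y \<partial>lborel)"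
      using AEx
    proof eventually_elim
      case (elim x)
      define k where "k = \<lfloor>x/\<tau>\<rfloor>"
      have f1: "of_int k \<le> x/\<tau>" "x/\<tau> < of_int k + 1" unfolding k_def by linarith+
      have "of_int k * \<tau> \<le> x" "x < (of_int k + 1) * \<tau>"
        using f1 tau by (simp_all add: field_simps)
      moreover have "x \<noteq> of_int k * \<tau>" using elim by auto
      ultimately have xin: "x \<in> {of_int k * \<tau> <..< (of_int k + 1) * \<tau>}" by auto
      have "(\<integral>\<^sup>+y. ennreal ((u y)\<^sup>2) * indicator E x * indicator {y. \<lfloor>y/\<tau>\<rfloor> = \<lfloor>x/\<tau>\<rfloor>} y \<partial>lborel)
        = indicator E x * (\<integral>\<^sup>+y. ennreal ((u y)\<^sup>2) * indicator {y. \<lfloor>y/\<tau>\<rfloor> = k} y \<partial>lborel)"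
        unfolding k_def by (subst nn_integral_cmult[symmetric]) (auto intro!: nn_integral_cong simp: mult_ac)
      then show ?case using cell_integral[OF tau um pc xin] by (simp add: mult_ac)
    qed
  qed
  also have "\<dots> = ennreal (1/\<tau>) * (\<integral>\<^sup>+x. (\<integral>\<^sup>+y. ennreal ((u y)\<^sup>2) * indicator E x * indicator {y. \<lfloor>y/\<tau>\<rfloor> = \<lfloor>x/\<tau>\<rfloor>} y \<partial>lborel) \<partial>lborel)"
    by (rule nn_integral_cmult) measurable
  also have "(\<integral>\<^sup>+x. (\<integral>\<^sup>+y. ennreal ((u y)\<^sup>2) * indicator E x * indicator {y. \<lfloor>y/\<tau>\<rfloor> = \<lfloor>x/\<tau>\<rfloor>} y \<partial>lborel) \<partial>lborel)
     = (\<integral>\<^sup>+y. (\<integral>\<^sup>+x. ennreal ((u y)\<^sup>2) * indicator E x * indicator {y. \<lfloor>y/\<tau>\<rfloor> = \<lfloor>x/\<tau>\<rfloor>} y \<partial>lborel) \<partial>lborel)"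
    by (rule lborel_pair.Fubini'[symmetric]) measurable
  also have "\<dots> = (\<integral>\<^sup>+y. ennreal ((u y)\<^sup>2) * emeasure lborel (E \<inter> {x. \<lfloor>x/\<tau>\<rfloor> = \<lfloor>y/\<tau>\<rfloor>}) \<partial>lborel)"
  proof (rule nn_integral_cong)
    fix y
    have "(\<integral>\<^sup>+x. ennreal ((u y)\<^sup>2) * indicator E x * indicator {y. \<lfloor>y/\<tau>\<rfloor> = \<lfloor>x/\<tau>\<rfloor>} y \<partial>lborel)
       = (\<integral>\<^sup>+x. ennreal ((u y)\<^sup>2) * indicator (E \<inter> {x. \<lfloor>x/\<tau>\<rfloor> = \<lfloor>y/\<tau>\<rfloor>}) x \<partial>lborel)"
      by (rule nn_integral_cong) (auto simp: indicator_def)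
    also have "\<dots> = ennreal ((u y)\<^sup>2) * emeasure lborel (E \<inter> {x. \<lfloor>x/\<tau>\<rfloor> = \<lfloor>y/\<tau>\<rfloor>})"
      by (rule nn_integral_cmult_indicator) measurable
    finally show "(\<integral>\<^sup>+x. ennreal ((u y)\<^sup>2) * indicator E x * indicator {y. \<lfloor>y/\<tau>\<rfloor> = \<lfloor>x/\<tau>\<rfloor>} y \<partial>lborel)
       = ennreal ((u y)\<^sup>2) * emeasure lborel (E \<inter> {x. \<lfloor>x/\<tau>\<rfloor> = \<lfloor>y/\<tau>\<rfloor>})" .
  qed
  also have "\<dots> \<le> (\<integral>\<^sup>+y. ennreal ((u y)\<^sup>2) * ennreal s \<partial>lborel)"
    by (rule nn_integral_mono) (rule mult_left_mono[OF Ek], simp)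
  also have "\<dots> = ennreal s * (\<integral>\<^sup>+y. ennreal ((u y)\<^sup>2) \<partial>lborel)"
    by (subst nn_integral_cmult[symmetric]) (auto simp: mult_ac)
  also have "ennreal (1/\<tau>) * (ennreal s * (\<integral>\<^sup>+y. ennreal ((u y)\<^sup>2) \<partial>lborel)) = ennreal (s/\<tau>) * (\<integral>\<^sup>+y. ennreal ((u y)\<^sup>2) \<partial>lborel)"
    using tau s by (simp add: mult.assoc[symmetric] ennreal_mult'[symmetric] divide_inverse mult_ac)
  finally show ?thesis by (simp add: mult_left_mono)
qed

lemma sq_diff_le: "(a - b)\<^sup>2 \<le> 2 * a\<^sup>2 + 2 * (b::real)\<^sup>2"
  using zero_le_power2[of "a+b"] by (simp add: power2_eq_square algebra_simps)

lemma shift_nn: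
  fixes f :: "real \<Rightarrow> ennreal"
  assumes [measurable]: "f \<in> borel_measurable borel"
  shows "(\<integral>\<^sup>+x. f (x - s) \<partial>lborel) = (\<integral>\<^sup>+x. f x \<partial>lborel)"
  using nn_integral_real_affine[of f 1 "-s"] by simp

lemma shift_bound:
  fixes u :: "real \<Rightarrow> real" and \<tau> s :: real
  assumes tau: "\<tau> > 0" and um[measurable]: "u \<in> borel_measurable lborel"
    and pc: "\<forall>k::int. \<exists>c. \<forall>x \<in> {of_int k * \<tau> <..< (of_int k + 1) * \<tau>}. u x = c"
    and s: "s \<ge> 0"
  shows "(\<integral>\<^sup>+x. ennreal ((u x - u (x - s))\<^sup>2) \<partial>lborel) \<le> ennreal (4 * s / \<tau>) * (\<integral>\<^sup>+x. ennreal ((u x)\<^sup>2) \<partial>lborel)"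
proof (cases "s \<le> \<tau>")
  case False
  have "(\<integral>\<^sup>+x. ennreal ((u x - u (x - s))\<^sup>2) \<partial>lborel) \<le> (\<integral>\<^sup>+x. ennreal (2 * (u x)\<^sup>2) + ennreal (2 * (u (x - s))\<^sup>2) \<partial>lborel)"
    by (rule nn_integral_mono) (simp add: ennreal_plus[symmetric] del: ennreal_plus add: sq_diff_le)
  also have "\<dots> = (\<integral>\<^sup>+x. ennreal (2 * (u x)\<^sup>2) \<partial>lborel) + (\<integral>\<^sup>+x. ennreal (2 * (u (x - s))\<^sup>2) \<partial>lborel)"
    by (rule nn_integral_add) auto
  also have "(\<integral>\<^sup>+x. ennreal (2 * (u (x - s))\<^sup>2) \<partial>lborel) = (\<integral>\<^sup>+x. ennreal (2 * (u x)\<^sup>2) \<partial>lborel)"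
    by (rule shift_nn[of "\<lambda>x. ennreal (2 * (u x)\<^sup>2)"]) measurable
  also have "(\<integral>\<^sup>+x. ennreal (2 * (u x)\<^sup>2) \<partial>lborel) = 2 * (\<integral>\<^sup>+x. ennreal ((u x)\<^sup>2) \<partial>lborel)"
    by (subst nn_integral_cmult[symmetric]) (auto simp: ennreal_mult)
  also have "2 * (\<integral>\<^sup>+x. ennreal ((u x)\<^sup>2) \<partial>lborel) + 2 * (\<integral>\<^sup>+x. ennreal ((u x)\<^sup>2) \<partial>lborel)
      = ennreal 4 * (\<integral>\<^sup>+x. ennreal ((u x)\<^sup>2) \<partial>lborel)"
    by (simp add: distrib_right[symmetric])
  also have "\<dots> \<le> ennreal (4 * s / \<tau>) * (\<integral>\<^sup>+x. ennreal ((u x)\<^sup>2) \<partial>lborel)"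
    using False tau by (intro mult_right_mono ennreal_leI) (auto simp: field_simps)
  finally show ?thesis .
next
  case True
  define E1 where "E1 = {x. \<lceil>(x - s)/\<tau>\<rceil> \<le> \<lfloor>x/\<tau>\<rfloor>}"
  define E2 where "E2 = {z. \<lceil>z/\<tau>\<rceil> \<le> \<lfloor>(s + z)/\<tau>\<rfloor>}"
  have [measurable]: "E1 \<in> sets lborel" "E2 \<in> sets lborel" unfolding E1_def E2_def by measurable
  have pt: "(u x - u (x - s))\<^sup>2 \<le> (2 * (u x)\<^sup>2 + 2 * (u (x - s))\<^sup>2) * indicator E1 x" for x
  proof (cases "x \<in> E1")
    case True then show ?thesis by (simp add: sq_diff_le)
  next
    case False
    define k where "k = \<lfloor>x/\<tau>\<rfloor>"
    have "k < (x - s)/\<tau>" using False unfolding E1_def k_def by (simp add: not_le less_ceiling_iff)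
    hence a: "of_int k * \<tau> < x - s" using tau by (simp add: field_simps)
    have "x/\<tau> < of_int k + 1" unfolding k_def by linarith
    hence b: "x < (of_int k + 1) * \<tau>" using tau by (simp add: field_simps)
    obtain c where c: "\<forall>y \<in> {of_int k * \<tau> <..< (of_int k + 1) * \<tau>}. u y = c" using pc by blast
    have "u x = c" "u (x - s) = c" using c a b s by auto
    then show ?thesis using False by simp
  qed
  have "(\<integral>\<^sup>+x. ennreal ((u x - u (x - s))\<^sup>2) \<partial>lborel)
      \<le> (\<integral>\<^sup>+x. ennreal (2 * (u x)\<^sup>2) * indicator E1 x + ennreal (2 * (u (x - s))\<^sup>2) * indicator E1 x \<partial>lborel)"
  proof (rule nn_integral_mono)
    fix x
    show "ennreal ((u x - u (x - s))\<^sup>2) \<le> ennreal (2 * (u x)\<^sup>2) * indicator E1 x + ennreal (2 * (u (x - s))\<^sup>2) * indicator E1 x"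
      using pt[of x] by (cases "x \<in> E1") (auto simp: ennreal_plus[symmetric] simp del: ennreal_plus intro!: ennreal_leI)
  qed
  also have "\<dots> = (\<integral>\<^sup>+x. ennreal (2 * (u x)\<^sup>2) * indicator E1 x \<partial>lborel) + (\<integral>\<^sup>+x. ennreal (2 * (u (x - s))\<^sup>2) * indicator E1 x \<partial>lborel)"
    by (rule nn_integral_add) auto
  also have "(\<integral>\<^sup>+x. ennreal (2 * (u (x - s))\<^sup>2) * indicator E1 x \<partial>lborel) = (\<integral>\<^sup>+z. ennreal (2 * (u z)\<^sup>2) * indicator E2 z \<partial>lborel)"
  proof -
    have "(\<integral>\<^sup>+x. ennreal (2 * (u (x - s))\<^sup>2) * indicator E1 x \<partial>lborel) = (\<integral>\<^sup>+z. ennreal (2 * (u (s + z - s))\<^sup>2) * indicator E1 (s + z) \<partial>lborel)"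
      using nn_integral_real_affine[of "\<lambda>x. ennreal (2 * (u (x - s))\<^sup>2) * indicator E1 x" 1 s] by simp
    also have "\<dots> = (\<integral>\<^sup>+z. ennreal (2 * (u z)\<^sup>2) * indicator E2 z \<partial>lborel)"
      by (rule nn_integral_cong) (simp add: E1_def E2_def indicator_def)
    finally show ?thesis .
  qed
  also have "(\<integral>\<^sup>+x. ennreal (2 * (u x)\<^sup>2) * indicator E1 x \<partial>lborel) = 2 * (\<integral>\<^sup>+x. ennreal ((u x)\<^sup>2) * indicator E1 x \<partial>lborel)"
    by (subst nn_integral_cmult[symmetric]) (auto simp: ennreal_mult mult_ac)
  also have "(\<integral>\<^sup>+x. ennreal (2 * (u x)\<^sup>2) * indicator E2 x \<partial>lborel) = 2 * (\<integral>\<^sup>+x. ennreal ((u x)\<^sup>2) * indicator E2 x \<partial>lborel)"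
    by (subst nn_integral_cmult[symmetric]) (auto simp: ennreal_mult mult_ac)
  also have "(\<integral>\<^sup>+x. ennreal ((u x)\<^sup>2) * indicator E1 x \<partial>lborel) \<le> ennreal (s/\<tau>) * (\<integral>\<^sup>+x. ennreal ((u x)\<^sup>2) \<partial>lborel)"
  proof (rule cell_bound[OF tau um pc _ s])
    fix k :: int
    have "E1 \<inter> {x. \<lfloor>x/\<tau>\<rfloor> = k} \<subseteq> {of_int k * \<tau> .. of_int k * \<tau> + s}"
    proof
      fix x assume "x \<in> E1 \<inter> {x. \<lfloor>x/\<tau>\<rfloor> = k}"
      hence h1: "\<lceil>(x - s)/\<tau>\<rceil> \<le> k" and h2: "\<lfloor>x/\<tau>\<rfloor> = k" by (auto simp: E1_def)
      have "(x - s)/\<tau> \<le> k" using h1 by (meson ceiling_le_iff)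
      hence "x \<le> of_int k * \<tau> + s" using tau by (simp add: field_simps)
      moreover have "of_int k \<le> x/\<tau>" using h2 by linarith
      hence "of_int k * \<tau> \<le> x" using tau by (simp add: field_simps)
      ultimately show "x \<in> {of_int k * \<tau> .. of_int k * \<tau> + s}" by simp
    qed
    hence "emeasure lborel (E1 \<inter> {x. \<lfloor>x/\<tau>\<rfloor> = k}) \<le> emeasure lborel {of_int k * \<tau> .. of_int k * \<tau> + s}"
      by (rule emeasure_mono) simp
    also have "\<dots> = ennreal s" using s by simp
    finally show "emeasure lborel (E1 \<inter> {x. \<lfloor>x/\<tau>\<rfloor> = k}) \<le> ennreal s" .
  qed measurable
  also have "(\<integral>\<^sup>+x. ennreal ((u x)\<^sup>2) * indicator E2 x \<partial>lborel) \<le> ennreal (s/\<tau>) * (\<integral>\<^sup>+x. ennreal ((u x)\<^sup>2) \<partial>lborel)"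
  proof (rule cell_bound[OF tau um pc _ s])
    fix k :: int
    have "E2 \<inter> {x. \<lfloor>x/\<tau>\<rfloor> = k} \<subseteq> {of_int k * \<tau>} \<union> {(of_int k + 1) * \<tau> - s .. (of_int k + 1) * \<tau> - s + s}"
    proof
      fix x assume "x \<in> E2 \<inter> {x. \<lfloor>x/\<tau>\<rfloor> = k}"
      hence h1: "\<lceil>x/\<tau>\<rceil> \<le> \<lfloor>(s + x)/\<tau>\<rfloor>" and h2: "\<lfloor>x/\<tau>\<rfloor> = k" by (auto simp: E2_def)
      have l: "of_int k \<le> x/\<tau>" "x/\<tau> < of_int k + 1" using h2 by linarith+
      show "x \<in> {of_int k * \<tau>} \<union> {(of_int k + 1) * \<tau> - s .. (of_int k + 1) * \<tau> - s + s}"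
      proof (cases "x/\<tau> = of_int k")
        case True then show ?thesis using tau by (simp add: field_simps)
      next
        case False
        hence "of_int k < x/\<tau>" using l by simp
        hence "\<lceil>x/\<tau>\<rceil> = k + 1" using l by (simp add: ceiling_eq_iff)
        hence "k + 1 \<le> \<lfloor>(s + x)/\<tau>\<rfloor>" using h1 by simp
        hence "of_int k + 1 \<le> (s + x)/\<tau>" by linarith
        hence "(of_int k + 1) * \<tau> - s \<le> x" using tau by (simp add: field_simps)
        moreover have "x < (of_int k + 1) * \<tau>" using l tau by (simp add: field_simps)
        ultimately show ?thesis by simp
      qed
    qed
    hence "emeasure lborel (E2 \<inter> {x. \<lfloor>x/\<tau>\<rfloor> = k}) \<le> emeasure lborel ({of_int k * \<tau>} \<union> {(of_int k + 1) * \<tau> - s .. (of_int k + 1) * \<tau> - s + s})"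
      by (rule emeasure_mono) simp
    also have "\<dots> \<le> emeasure lborel {of_int k * \<tau>} + emeasure lborel {(of_int k + 1) * \<tau> - s .. (of_int k + 1) * \<tau> - s + s}"
      by (rule emeasure_subadditive) auto
    also have "\<dots> = ennreal s" using s by simp
    finally show "emeasure lborel (E2 \<inter> {x. \<lfloor>x/\<tau>\<rfloor> = k}) \<le> ennreal s" .
  qed measurable
  also have "2 * (ennreal (s/\<tau>) * (\<integral>\<^sup>+x. ennreal ((u x)\<^sup>2) \<partial>lborel)) + 2 * (ennreal (s/\<tau>) * (\<integral>\<^sup>+x. ennreal ((u x)\<^sup>2) \<partial>lborel))
      = ennreal (4 * s / \<tau>) * (\<integral>\<^sup>+x. ennreal ((u x)\<^sup>2) \<partial>lborel)"
  proof -
    have "ennreal (4 * s / \<tau>) = 2 * ennreal (s/\<tau>) + 2 * ennreal (s/\<tau>)"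
    proof -
      have "ennreal (4 * s / \<tau>) = ennreal (2 * (s/\<tau>)) + ennreal (2 * (s/\<tau>))"
        using s tau by (subst ennreal_plus[symmetric]) (auto simp: field_simps)
      also have "ennreal (2 * (s/\<tau>)) = 2 * ennreal (s/\<tau>)" using ennreal_mult'[of 2 "s/\<tau>"] by simp
      finally show ?thesis .
    qed
    then show ?thesis by (simp add: distrib_right mult.assoc)
  qed
  finally show ?thesis by (simp add: add_mono mult_left_mono)
qed

lemma G_erlang: "G_kernel \<beta> \<alpha> = erlang_density 0 (\<beta>/\<alpha>)"
  by (auto simp: fun_eq_iff G_kernel_def erlang_density_def)

lemma G_meas[measurable]: "G_kernel \<beta> \<alpha> \<in> borel_measurable borel"
  by (simp add: G_erlang)

lemma G_nonneg: "\<beta> > 0 \<Longrightarrow> \<alpha> > 0 \<Longrightarrow> G_kernel \<beta> \<alpha> s \<ge> 0"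
  by (simp add: G_kernel_def)

lemma G_le: "\<beta> > 0 \<Longrightarrow> \<alpha> > 0 \<Longrightarrow> G_kernel \<beta> \<alpha> s \<le> \<beta>/\<alpha>"
proof -
  assume a: "\<beta> > 0" "\<alpha> > 0"
  show ?thesis
  proof (cases "s \<ge> 0")
    case True
    have e: "exp (- \<beta> * s / \<alpha>) \<le> 1" using a True by simp
    have "\<beta>/\<alpha> * exp (- \<beta> * s / \<alpha>) \<le> \<beta>/\<alpha> * 1" by (rule mult_left_mono[OF e]) (use a in simp)
    moreover have "G_kernel \<beta> \<alpha> s = \<beta>/\<alpha> * exp (- \<beta> * s / \<alpha>)" using True by (simp add: G_kernel_def)
    ultimately show ?thesis by simp
  qed (use a in \<open>simp add: G_kernel_def\<close>)
qed

lemma G_nn1: "\<beta> > 0 \<Longrightarrow> \<alpha> > 0 \<Longrightarrow> (\<integral>\<^sup>+s. ennreal (G_kernel \<beta> \<alpha> s) \<partial>lborel) = 1"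
  using nn_integral_erlang_ith_moment[of "\<beta>/\<alpha>" 0 0] by (simp add: G_erlang)

lemma G_moment: "\<beta> > 0 \<Longrightarrow> \<alpha> > 0 \<Longrightarrow> (\<integral>\<^sup>+s. ennreal (G_kernel \<beta> \<alpha> s * s) \<partial>lborel) = ennreal (\<alpha>/\<beta>)"
  using nn_integral_erlang_ith_moment[of "\<beta>/\<alpha>" 0 1] by (simp add: G_erlang)

lemma G_int: assumes "\<beta> > 0" "\<alpha> > 0" shows "integrable lborel (G_kernel \<beta> \<alpha>)" "(LINT s|lborel. G_kernel \<beta> \<alpha> s) = 1"
proof -
  show i: "integrable lborel (G_kernel \<beta> \<alpha>)"
    by (rule integrableI_nonneg) (use assms G_nn1[OF assms] G_nonneg[OF assms] in auto)
  show "(LINT s|lborel. G_kernel \<beta> \<alpha> s) = 1"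
    using integral_eq_nn_integral[of "G_kernel \<beta> \<alpha>" lborel] G_nn1[OF assms] G_nonneg[OF assms] by simp
qed

lemma G_sq_int: assumes "\<beta> > 0" "\<alpha> > 0" shows "integrable lborel (\<lambda>s. (G_kernel \<beta> \<alpha> s)\<^sup>2)"
proof (rule Bochner_Integration.integrable_bound[of _ "\<lambda>s. \<beta>/\<alpha> * G_kernel \<beta> \<alpha> s"])
  show "integrable lborel (\<lambda>s. \<beta>/\<alpha> * G_kernel \<beta> \<alpha> s)" using G_int[OF assms] by simp
  show "AE s in lborel. norm ((G_kernel \<beta> \<alpha> s)\<^sup>2) \<le> norm (\<beta>/\<alpha> * G_kernel \<beta> \<alpha> s)"
  proof (rule AE_I2)
    fix s
    have "G_kernel \<beta> \<alpha> s * G_kernel \<beta> \<alpha> s \<le> \<beta>/\<alpha> * G_kernel \<beta> \<alpha> s"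
      by (rule mult_right_mono[OF G_le[OF assms] G_nonneg[OF assms]])
    then show "norm ((G_kernel \<beta> \<alpha> s)\<^sup>2) \<le> norm (\<beta>/\<alpha> * G_kernel \<beta> \<alpha> s)"
      using G_nonneg[OF assms, of s] assms by (simp add: power2_eq_square)
  qed
qed measurable

lemma jensen:
  fixes w h :: "real \<Rightarrow> real"
  assumes [measurable]: "w \<in> borel_measurable lborel" "h \<in> borel_measurable lborel"
    and w0: "\<And>y. w y \<ge> 0" and wi: "integrable lborel w" and w1: "(LINT y|lborel. w y) = 1"
    and whi: "integrable lborel (\<lambda>y. w y * h y)"
  shows "ennreal ((LINT y|lborel. w y * h y)\<^sup>2) \<le> (\<integral>\<^sup>+y. ennreal (w y * (h y)\<^sup>2) \<partial>lborel)"
proof (cases "(\<integral>\<^sup>+y. ennreal (w y * (h y)\<^sup>2) \<partial>lborel) = \<infinity>")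
  case True then show ?thesis by simp
next
  case False
  have i2: "integrable lborel (\<lambda>y. w y * (h y)\<^sup>2)"
    by (rule integrableI_nonneg) (use False w0 in \<open>auto simp: top.not_eq_extremum\<close>)
  define m where "m = (LINT y|lborel. w y * h y)"
  have "0 \<le> (LINT y|lborel. w y * (h y - m)\<^sup>2)"
    using w0 by (intro integral_nonneg_AE) auto
  also have "(LINT y|lborel. w y * (h y - m)\<^sup>2) = (LINT y|lborel. w y * (h y)\<^sup>2 - (2 * m) * (w y * h y) + m\<^sup>2 * w y)"
    by (rule Bochner_Integration.integral_cong) (auto simp: power2_eq_square algebra_simps)
  also have "\<dots> = (LINT y|lborel. w y * (h y)\<^sup>2) - 2 * m * m + m\<^sup>2"
    using i2 whi wi w1 by (simp add: m_def)
  finally have "m\<^sup>2 \<le> (LINT y|lborel. w y * (h y)\<^sup>2)" by (simp add: power2_eq_square)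
  moreover have "(\<integral>\<^sup>+y. ennreal (w y * (h y)\<^sup>2) \<partial>lborel) = ennreal (LINT y|lborel. w y * (h y)\<^sup>2)"
    using i2 w0 by (intro nn_integral_eq_integral) auto
  ultimately show ?thesis by (simp add: m_def ennreal_leI)
qed

lemma abs_mult_le_sq: "\<bar>a * b\<bar> \<le> a\<^sup>2 + (b::real)\<^sup>2"
proof -
  have "0 \<le> (\<bar>a\<bar> - \<bar>b\<bar>)\<^sup>2" by simp
  hence "2 * (\<bar>a\<bar> * \<bar>b\<bar>) \<le> \<bar>a\<bar>\<^sup>2 + \<bar>b\<bar>\<^sup>2" by (simp add: power2_diff)
  moreover have "0 \<le> \<bar>a\<bar> * \<bar>b\<bar>" by simp
  moreover have "\<bar>a * b\<bar> = \<bar>a\<bar> * \<bar>b\<bar>" "\<bar>a\<bar>\<^sup>2 = a\<^sup>2" "\<bar>b\<bar>\<^sup>2 = b\<^sup>2" by (simp_all add: abs_mult)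
  ultimately show ?thesis by linarith
qed

lemma pointwise:
  fixes u :: "real \<Rightarrow> real"
  assumes b: "\<beta> > 0" and a: "\<alpha> > 0" and um[measurable]: "u \<in> borel_measurable lborel"
    and ui: "integrable lborel (\<lambda>x. (u x)\<^sup>2)"
  shows "ennreal ((u x - conv (G_kernel \<beta> \<alpha>) u x)\<^sup>2) \<le> (\<integral>\<^sup>+y. ennreal (G_kernel \<beta> \<alpha> (x - y) * (u x - u y)\<^sup>2) \<partial>lborel)"
proof -
  define w where "w = (\<lambda>y. G_kernel \<beta> \<alpha> (x - y))"
  have wm[measurable]: "w \<in> borel_measurable lborel" unfolding w_def by measurable
  have wi: "integrable lborel w"
    using lborel_integrable_real_affine[OF G_int(1)[OF b a], of "-1" x] by (simp add: w_def)
  have w1: "(LINT y|lborel. w y) = 1"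
    using lborel_integral_real_affine[of "-1" "G_kernel \<beta> \<alpha>" x] G_int(2)[OF b a] by (simp add: w_def)
  have w2i: "integrable lborel (\<lambda>y. (w y)\<^sup>2)"
    using lborel_integrable_real_affine[OF G_sq_int[OF b a], of "-1" x] by (simp add: w_def)
  have wui: "integrable lborel (\<lambda>y. w y * u y)"
  proof (rule Bochner_Integration.integrable_bound[of _ "\<lambda>y. (w y)\<^sup>2 + (u y)\<^sup>2"])
    show "integrable lborel (\<lambda>y. (w y)\<^sup>2 + (u y)\<^sup>2)" using w2i ui by simp
    show "AE y in lborel. norm (w y * u y) \<le> norm ((w y)\<^sup>2 + (u y)\<^sup>2)"
      by (rule AE_I2) (use abs_mult_le_sq in auto)
  qed measurable
  have w0: "\<And>y. w y \<ge> 0" unfolding w_def using G_nonneg[OF b a] by simp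
  have whi: "integrable lborel (\<lambda>y. w y * (u x - u y))"
    using wi wui by (simp add: algebra_simps)
  have eq: "u x - conv (G_kernel \<beta> \<alpha>) u x = (LINT y|lborel. w y * (u x - u y))"
  proof -
    have "(LINT y|lborel. w y * (u x - u y)) = (LINT y|lborel. u x * w y - w y * u y)"
      by (simp add: algebra_simps)
    also have "\<dots> = u x * (LINT y|lborel. w y) - (LINT y|lborel. w y * u y)"
      using wi wui by simp
    finally show ?thesis using w1 by (simp add: conv_def w_def)
  qed
  show ?thesis unfolding eq
    using jensen[OF wm _ w0 wi w1 whi] by (simp add: w_def)
qed

lemma main_bound:
  fixes u :: "real \<Rightarrow> real"
  assumes b: "\<beta> > 0" and a: "\<alpha> > 0" and tau: "\<tau> > 0" and um[measurable]: "u \<in> borel_measurable lborel"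
    and ui: "integrable lborel (\<lambda>x. (u x)\<^sup>2)"
    and pc: "\<forall>k::int. \<exists>c. \<forall>x \<in> {of_int k * \<tau> <..< (of_int k + 1) * \<tau>}. u x = c"
  shows "(\<integral>\<^sup>+x. ennreal ((u x - conv (G_kernel \<beta> \<alpha>) u x)\<^sup>2) \<partial>lborel)
     \<le> ennreal (\<alpha>/\<beta>) * (ennreal (4/\<tau>) * (\<integral>\<^sup>+x. ennreal ((u x)\<^sup>2) \<partial>lborel))"
proof -
  define U where "U = (\<integral>\<^sup>+x. ennreal ((u x)\<^sup>2) \<partial>lborel)"
  have "(\<integral>\<^sup>+x. ennreal ((u x - conv (G_kernel \<beta> \<alpha>) u x)\<^sup>2) \<partial>lborel)
     \<le> (\<integral>\<^sup>+x. (\<integral>\<^sup>+y. ennreal (G_kernel \<beta> \<alpha> (x - y) * (u x - u y)\<^sup>2) \<partial>lborel) \<partial>lborel)"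
    by (rule nn_integral_mono) (rule pointwise[OF b a um ui])
  also have "\<dots> = (\<integral>\<^sup>+x. (\<integral>\<^sup>+s. ennreal (G_kernel \<beta> \<alpha> s) * ennreal ((u x - u (x - s))\<^sup>2) \<partial>lborel) \<partial>lborel)"
  proof (rule nn_integral_cong)
    fix x
    show "(\<integral>\<^sup>+y. ennreal (G_kernel \<beta> \<alpha> (x - y) * (u x - u y)\<^sup>2) \<partial>lborel)
       = (\<integral>\<^sup>+s. ennreal (G_kernel \<beta> \<alpha> s) * ennreal ((u x - u (x - s))\<^sup>2) \<partial>lborel)"
      using nn_integral_real_affine[of "\<lambda>y. ennreal (G_kernel \<beta> \<alpha> (x - y) * (u x - u y)\<^sup>2)" "-1" x]
      using G_nonneg[OF b a] by (simp add: ennreal_mult)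
  qed
  also have "\<dots> = (\<integral>\<^sup>+s. (\<integral>\<^sup>+x. ennreal (G_kernel \<beta> \<alpha> s) * ennreal ((u x - u (x - s))\<^sup>2) \<partial>lborel) \<partial>lborel)"
    by (rule lborel_pair.Fubini') measurable
  also have "\<dots> = (\<integral>\<^sup>+s. ennreal (G_kernel \<beta> \<alpha> s) * (\<integral>\<^sup>+x. ennreal ((u x - u (x - s))\<^sup>2) \<partial>lborel) \<partial>lborel)"
    by (rule nn_integral_cong) (rule nn_integral_cmult, measurable)
  also have "\<dots> \<le> (\<integral>\<^sup>+s. ennreal (G_kernel \<beta> \<alpha> s * s) * (ennreal (4/\<tau>) * U) \<partial>lborel)"
  proof (rule nn_integral_mono)
    fix s
    show "ennreal (G_kernel \<beta> \<alpha> s) * (\<integral>\<^sup>+x. ennreal ((u x - u (x - s))\<^sup>2) \<partial>lborel)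
        \<le> ennreal (G_kernel \<beta> \<alpha> s * s) * (ennreal (4/\<tau>) * U)"
    proof (cases "s \<ge> 0")
      case False then show ?thesis by (simp add: G_kernel_def)
    next
      case True
      have "ennreal (G_kernel \<beta> \<alpha> s) * (\<integral>\<^sup>+x. ennreal ((u x - u (x - s))\<^sup>2) \<partial>lborel)
          \<le> ennreal (G_kernel \<beta> \<alpha> s) * (ennreal (4 * s / \<tau>) * U)"
        unfolding U_def by (rule mult_left_mono[OF shift_bound[OF tau um pc True]]) simp
      also have "ennreal (4 * s / \<tau>) = ennreal s * ennreal (4/\<tau>)"
        using True tau by (simp add: ennreal_mult'[symmetric])
      also have "ennreal (G_kernel \<beta> \<alpha> s) * (ennreal s * ennreal (4/\<tau>) * U) = ennreal (G_kernel \<beta> \<alpha> s * s) * (ennreal (4/\<tau>) * U)"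
        using True G_nonneg[OF b a, of s] by (simp add: ennreal_mult mult_ac)
      finally show ?thesis .
    qed
  qed
  also have "\<dots> = (\<integral>\<^sup>+s. ennreal (G_kernel \<beta> \<alpha> s * s) \<partial>lborel) * (ennreal (4/\<tau>) * U)"
    by (rule nn_integral_multc) measurable
  also have "\<dots> = ennreal (\<alpha>/\<beta>) * (ennreal (4/\<tau>) * U)" by (simp add: G_moment[OF b a])
  finally show ?thesis unfolding U_def .
qed

theorem proposition17:
  fixes \<beta> :: real
  assumes "\<beta> > 0"
  shows "\<forall>\<epsilon>>0. \<exists>C>0. \<forall>\<tau>>0. \<forall>\<alpha>. 0 < \<alpha> \<and> \<alpha> \<le> \<tau> / C \<longrightarrow>
           (\<forall>u :: real \<Rightarrow> real.
              u \<in> borel_measurable lborel \<and> integrable lborel (\<lambda>x. (u x)\<^sup>2) \<and>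
              (\<forall>k::int. \<exists>c. \<forall>x \<in> {of_int k * \<tau> <..< (of_int k + 1) * \<tau>}. u x = c)
              \<longrightarrow> L2_norm (\<lambda>x. u x - conv (G_kernel \<beta> \<alpha>) u x) \<le> \<epsilon> * L2_norm u)"
proof (intro allI impI)
  fix \<epsilon> :: real assume e: "\<epsilon> > 0"
  have b: "\<beta> > 0" by (rule assms)
  define C where "C = 4 / (\<beta> * \<epsilon>\<^sup>2)"
  have C: "C > 0" using e b by (simp add: C_def)
  show "\<exists>C>0. \<forall>\<tau>>0. \<forall>\<alpha>. 0 < \<alpha> \<and> \<alpha> \<le> \<tau> / C \<longrightarrow>
           (\<forall>u :: real \<Rightarrow> real.
              u \<in> borel_measurable lborel \<and> integrable lborel (\<lambda>x. (u x)\<^sup>2) \<and>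
              (\<forall>k::int. \<exists>c. \<forall>x \<in> {of_int k * \<tau> <..< (of_int k + 1) * \<tau>}. u x = c)
              \<longrightarrow> L2_norm (\<lambda>x. u x - conv (G_kernel \<beta> \<alpha>) u x) \<le> \<epsilon> * L2_norm u)"
  proof (intro exI[of _ C] conjI C allI impI)
    fix \<tau> \<alpha> :: real and u :: "real \<Rightarrow> real"
    assume tau: "\<tau> > 0" and al: "0 < \<alpha> \<and> \<alpha> \<le> \<tau> / C"
    assume H: "u \<in> borel_measurable lborel \<and> integrable lborel (\<lambda>x. (u x)\<^sup>2) \<and>
              (\<forall>k::int. \<exists>c. \<forall>x \<in> {of_int k * \<tau> <..< (of_int k + 1) * \<tau>}. u x = c)"
    have a: "\<alpha> > 0" using al by simp
    have um[measurable]: "u \<in> borel_measurable lborel" and ui: "integrable lborel (\<lambda>x. (u x)\<^sup>2)"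
      and pc: "\<forall>k::int. \<exists>c. \<forall>x \<in> {of_int k * \<tau> <..< (of_int k + 1) * \<tau>}. u x = c" using H by auto
    define I where "I = (LINT x|lborel. (u x)\<^sup>2)"
    have I0: "I \<ge> 0" unfolding I_def by simp
    have UI: "(\<integral>\<^sup>+x. ennreal ((u x)\<^sup>2) \<partial>lborel) = ennreal I"
      unfolding I_def using ui by (intro nn_integral_eq_integral) auto
    have vm[measurable]: "(\<lambda>x. u x - conv (G_kernel \<beta> \<alpha>) u x) \<in> borel_measurable lborel"
      unfolding conv_def by measurable
    have ratio: "4 * \<alpha> / (\<beta> * \<tau>) \<le> \<epsilon>\<^sup>2"
    proof -
      have "\<alpha> \<le> \<tau> * (\<beta> * \<epsilon>\<^sup>2) / 4" using al by (simp add: C_def)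
      then show ?thesis using b tau e by (simp add: field_simps)
    qed
    have "(\<integral>\<^sup>+x. ennreal ((u x - conv (G_kernel \<beta> \<alpha>) u x)\<^sup>2) \<partial>lborel)
       \<le> ennreal (\<alpha>/\<beta>) * (ennreal (4/\<tau>) * ennreal I)"
      using main_bound[OF b a tau um ui pc] by (simp add: UI)
    also have "\<dots> = ennreal (4 * \<alpha> / (\<beta> * \<tau>) * I)"
      using a b tau I0 by (simp add: ennreal_mult'[symmetric] ennreal_mult[symmetric])
    also have "\<dots> \<le> ennreal (\<epsilon>\<^sup>2 * I)"
      by (rule ennreal_leI) (rule mult_right_mono[OF ratio I0])
    finally have nb: "(\<integral>\<^sup>+x. ennreal ((u x - conv (G_kernel \<beta> \<alpha>) u x)\<^sup>2) \<partial>lborel) \<le> ennreal (\<epsilon>\<^sup>2 * I)" .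
    have "(LINT x|lborel. (u x - conv (G_kernel \<beta> \<alpha>) u x)\<^sup>2) = enn2real (\<integral>\<^sup>+x. ennreal ((u x - conv (G_kernel \<beta> \<alpha>) u x)\<^sup>2) \<partial>lborel)"
      by (rule integral_eq_nn_integral) auto
    also have "\<dots> \<le> enn2real (ennreal (\<epsilon>\<^sup>2 * I))"
      by (rule enn2real_mono[OF nb]) simp
    also have "\<dots> = \<epsilon>\<^sup>2 * I" using I0 by simp
    finally have "(LINT x|lborel. (u x - conv (G_kernel \<beta> \<alpha>) u x)\<^sup>2) \<le> \<epsilon>\<^sup>2 * I" .
    hence "sqrt (LINT x|lborel. (u x - conv (G_kernel \<beta> \<alpha>) u x)\<^sup>2) \<le> sqrt (\<epsilon>\<^sup>2 * I)" by simp
    also have "\<dots> = \<epsilon> * sqrt I" using e by (simp add: real_sqrt_mult)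
    finally show "L2_norm (\<lambda>x. u x - conv (G_kernel \<beta> \<alpha>) u x) \<le> \<epsilon> * L2_norm u"
      by (simp add: L2_norm_def I_def)
  qed
qed

end
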